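(* Let $\ell\ge 1$ be a fixed integer and $b>1$ a constant. If $|P_n^\ell|\in O(b^n)$ as $n\to\infty$, then $k_n\ge \dfrac{\ell\log_2 n}{\log_2 b}+O(1)$.
   Context: A system of $k$ stacks in series consists of an input queue, stacks $1,\dots,k$, and an output queue. A state records the contents of each stack and each queue (finitely many distinct labelled elements); there is one additional "illegal" state $\varnothing$. The moves are $m_1,\dots,m_{k+1}$: $m_i$ ($1\le i\le k$) pushes an element onto stack $i$, taking it from the front of the input queue if $i=1$ and popping it from the top of stack $i-1$ if $i>1$; $m_{k+1}$ pops the top of stack $k$ and enqueues it at the back of the output queue. For a word $w$ and a state $s$, $w\ast s$ is obtained by applying the moves of $w$ left to right, with $w\ast s=\varnothing$ if some move is illegal and $w\ast\varnothing=\varnothing$. $I(n,k)$ is the state with $1,\dots,n$ in the input queue (front to back) and everything else empty; for $\pi\in S_n$, $t_\pi$ is the state with only the output queue nonempty, containing $\pi(1),\dots,\pi(n)$ front to back. $P_n^k\subseteq S_n$ is the set of $\pi$ such that $w\ast I(n,k)=t_\pi$ for some word $w$. $k_n$ is the smallest integer $k$ with $P_n^k=S_n$. *)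

theory Defs
  imports Main "HOL-Library.Landau_Symbols" "HOL-Combinatorics.Permutations"
begin

text \<open>A state of a system of k stacks in series: Some (input queue (front first),
  list of the k stacks (index i-1 is stack i, each listed top first), output queue
  (front first)); None is the illegal state.\<close>
type_synonym state = "(nat list \<times> nat list list \<times> nat list) option"

fun move :: "nat \<Rightarrow> nat \<Rightarrow> state \<Rightarrow> state" where
  "move k i None = None"
| "move k i (Some (inp, st, out)) =
     (if i = 1 \<and> 1 \<le> k then
        (case inp of [] \<Rightarrow> None | x # xs \<Rightarrow> Some (xs, st[0 := x # st ! 0], out))
      else if 2 \<le> i \<and> i \<le> k then
        (case st ! (i - 2) of [] \<Rightarrow> None
          | x # xs \<Rightarrow> Some (inp, st[i - 2 := xs, i - 1 := x # st ! (i - 1)], out))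
      else if i = k + 1 \<and> 1 \<le> k then
        (case st ! (k - 1) of [] \<Rightarrow> None
          | x # xs \<Rightarrow> Some (inp, st[k - 1 := xs], out @ [x]))
      else None)"

definition act :: "nat \<Rightarrow> nat list \<Rightarrow> state \<Rightarrow> state" where
  "act k w s = foldl (\<lambda>s i. move k i s) s w"

definition init_state :: "nat \<Rightarrow> nat \<Rightarrow> state" where
  "init_state n k = Some ([1..<n+1], replicate k [], [])"

definition target_state :: "nat \<Rightarrow> nat \<Rightarrow> (nat \<Rightarrow> nat) \<Rightarrow> state" where
  "target_state n k \<pi> = Some ([], replicate k [], map \<pi> [1..<n+1])"

definition Pnk :: "nat \<Rightarrow> nat \<Rightarrow> (nat \<Rightarrow> nat) set" where
  "Pnk n k = {\<pi>. \<pi> permutes {1..n} \<and>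
      (\<exists>w \<in> lists {1..k+1}. act k w (init_state n k) = target_state n k \<pi>)}"

definition kn :: "nat \<Rightarrow> nat" where
  "kn n = (LEAST k. 1 \<le> k \<and> Pnk n k = {\<pi>. \<pi> permutes {1..n}})"

end

theory Submission
  imports Defs
begin


lemma act_Nil[simp]: "act k [] s = s" by (simp add: act_def)
lemma act_Cons[simp]: "act k (i#w) s = act k w (move k i s)" by (simp add: act_def)
lemma act_append: "act k (u@w) s = act k w (act k u s)" by (simp add: act_def)
lemma act_None[simp]: "act k w None = None" by (induction w) auto

lemma move_prefix:
  "move k j (Some(i,s,p@ou)) = map_option (\<lambda>(i',s',ou'). (i',s',p@ou')) (move k j (Some(i,s,ou)))"
  by (auto split: list.split)

declare move.simps(2)[simp del]

lemma act_prefix: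
  "act k w (Some(i,s,p@ou)) = map_option (\<lambda>(i',s',ou'). (i',s',p@ou')) (act k w (Some(i,s,ou)))"
proof (induction w arbitrary: i s ou)
  case Nil then show ?case by simp
next
  case (Cons j w)
  show ?case
  proof (cases "move k j (Some(i,s,ou))")
    case None
    then have "move k j (Some(i,s,p@ou)) = None" by (simp add: move_prefix)
    then show ?thesis using None by simp
  next
    case (Some t)
    obtain i2 s2 ou2 where t: "t = (i2,s2,ou2)" by (cases t)
    have "act k (j#w) (Some(i,s,p@ou)) = act k w (Some(i2,s2,p@ou2))"
      using Some t by (simp add: move_prefix)
    also have "\<dots> = map_option (\<lambda>(i',s',ou'). (i',s',p@ou')) (act k w (Some(i2,s2,ou2)))"
      by (rule Cons.IH)
    finally show ?thesis using Some t by simp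
  qed
qed

lemma act_prefix_Some:
  "act k w (Some(i,s,ou)) = Some(i',s',ou') \<Longrightarrow> act k w (Some(i,s,p@ou)) = Some(i',s',p@ou')"
  by (simp add: act_prefix)

lemma act_prefix_Some_rev:
  "act k w (Some(i,s,p@ou)) = Some(i',s',ou') \<Longrightarrow> \<exists>ou2. ou' = p@ou2 \<and> act k w (Some(i,s,ou)) = Some(i',s',ou2)"
  by (auto simp: act_prefix)

lemma act_out_mono:
  "act k w (Some(i,s,ou)) = Some(i',s',ou') \<Longrightarrow> \<exists>p. ou' = ou@p"
  using act_prefix_Some_rev[of k w i s ou "[]"] by auto

lemma move_valid: "move k i s \<noteq> None \<Longrightarrow> i \<in> {1..k+1}"
  by (cases s) (auto simp: move.simps split: if_splits)

lemma act_valid: "act k w s \<noteq> None \<Longrightarrow> w \<in> lists {1..k+1}"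
proof (induction w arbitrary: s)
  case (Cons i w)
  then have "move k i s \<noteq> None" by (metis act_Cons act_None)
  with Cons show ?case using move_valid by auto
qed simp

lemma move_len: "move k i (Some(inp,st,out)) = Some(inp',st',out') \<Longrightarrow> length st' = length st"
  by (auto simp: move.simps split: if_splits list.splits)

lemma act_len: "act k w (Some(inp,st,out)) = Some(inp',st',out') \<Longrightarrow> length st' = length st"
proof (induction w arbitrary: inp st out)
  case (Cons i w)
  then obtain a b c where m: "move k i (Some(inp,st,out)) = Some(a,b,c)"
    by (metis act_Cons act_None not_None_eq prod_cases3)
  with Cons show ?case using move_len by fastforce
qed simp

definition mapS :: "(nat \<Rightarrow> nat) \<Rightarrow> state \<Rightarrow> state" where
  "mapS f = map_option (\<lambda>(i,s,ou). (map f i, map (map f) s, map f ou))"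

lemma move_map:
  assumes "length st = k"
  shows "move k j (mapS f (Some(i,st,ou))) = mapS f (move k j (Some(i,st,ou)))"
  using assms by (auto simp: move.simps mapS_def nth_map map_update split: list.split)

lemma act_map: "length st = k \<Longrightarrow> act k w (mapS f (Some(i,st,ou))) = mapS f (act k w (Some(i,st,ou)))"
proof (induction w arbitrary: i st ou)
  case Nil then show ?case by simp
next
  case (Cons j w)
  show ?case
  proof (cases "move k j (Some(i,st,ou))")
    case None
    then show ?thesis using move_map[OF Cons.prems, of j f i ou] by (simp add: mapS_def)
  next
    case (Some t)
    obtain i2 s2 ou2 where t: "t = (i2,s2,ou2)" by (cases t)
    have l: "length s2 = k" using Some t move_len Cons.prems by metis
    show ?thesis using move_map[OF Cons.prems, of j f i ou] Some t Cons.IH[OF l]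
      by (simp add: mapS_def)
  qed
qed



lemma M1:
  assumes "length L = l" "length R = m" "1 \<le> l" "1 \<le> m" "i \<le> l"
  shows "move (l+m) i (Some(inp, L@R, out)) = map_option (\<lambda>(a,b,c). (a, b@R, out)) (move l i (Some(inp, L, ou)))"
  using assms by (auto simp: move.simps nth_append list_update_append split: list.split)

lemma M1out:
  assumes "i \<le> l" "move l i (Some(inp,L,ou)) = Some(a,b,c)"
  shows "c = ou"
  using assms by (auto simp: move.simps split: list.splits if_splits)

lemma M2a:
  assumes "length L = l" "length R = m" "1 \<le> l" "1 \<le> m"
  shows "move (l+m) (l+1) (Some(inp, L@R, out)) = (case L!(l-1) of [] \<Rightarrow> None | x#xs \<Rightarrow> Some(inp, L[l-1:=xs] @ R[0 := x # R!0], out))"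
  using assms by (auto simp: move.simps nth_append list_update_append split: list.split)

lemma M2b:
  assumes "1 \<le> l"
  shows "move l (l+1) (Some(inp,L,ou)) = (case L!(l-1) of [] \<Rightarrow> None | x#xs \<Rightarrow> Some(inp, L[l-1:=xs], ou@[x]))"
  using assms by (auto simp: move.simps split: list.split)

lemma M2c:
  assumes "1 \<le> m"
  shows "move m 1 (Some(x#q, R, out)) = Some(q, R[0:=x#R!0], out)"
  using assms by (auto simp: move.simps)

lemma M3:
  assumes "length L = l" "length R = m" "1 \<le> l" "1 \<le> m" "2 \<le> j"
  shows "move (l+m) (j+l) (Some(inp, L@R, out)) = map_option (\<lambda>(a,b,c). (inp, L@b, c)) (move m j (Some(q,R,out)))"
  using assms by (auto simp: move.simps nth_append list_update_append split: list.split)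

lemma M3q:
  assumes "2 \<le> j" "move m j (Some(q,R,out)) = Some(a,b,c)"
  shows "a = q"
  using assms by (auto simp: move.simps split: list.splits if_splits)



lemma split_gen:
  assumes "length L = l" "length R = m" "1 \<le> l" "1 \<le> m"
  and "act (l+m) w (Some(inp, L@R, out)) = Some(inp', S', out')"
  shows "\<exists>L' R' zs w1 w2. S' = L'@R' \<and> length L' = l \<and> length R' = m \<and>
     act l w1 (Some(inp, L, [])) = Some(inp', L', zs) \<and> act m w2 (Some(zs, R, out)) = Some([], R', out')"
  using assms
proof (induction w arbitrary: inp L R out)
  case Nil
  then show ?case by (intro exI[of _ L] exI[of _ R] exI[of _ "[]"] exI[of _ "[]"]) auto
next
  case (Cons i w)
  let ?s1 = "move (l+m) i (Some(inp,L@R,out))"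
  have s1: "act (l+m) w ?s1 = Some(inp', S', out')" using Cons.prems(5) by simp
  then have nn: "?s1 \<noteq> None" by (metis act_None option.distinct(1))
  consider "i \<le> l" | "i = l+1" | "i \<ge> l+2" by linarith
  then show ?case
  proof cases
    case 1
    note M = M1[OF Cons.prems(1-4) 1, of inp out "[]"]
    obtain a b c where mv: "move l i (Some(inp,L,[])) = Some(a,b,c)"
      using nn M by (cases "move l i (Some(inp,L,[]))") auto
    have c: "c = []" using M1out[OF 1 mv] .
    have lb: "length b = l" using move_len[OF mv] Cons.prems(1) by simp
    have "act (l+m) w (Some(a, b@R, out)) = Some(inp', S', out')" using s1 M mv by simp
    from Cons.IH[OF lb Cons.prems(2-4) this] obtain L' R' zs w1 w2 where
      h: "S' = L'@R'" "length L' = l" "length R' = m"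
         "act l w1 (Some(a, b, [])) = Some(inp', L', zs)" "act m w2 (Some(zs, R, out)) = Some([], R', out')"
      by blast
    show ?thesis
      by (rule exI[of _ L'], rule exI[of _ R'], rule exI[of _ zs], rule exI[of _ "i#w1"], rule exI[of _ w2])
         (use h mv c in simp)
  next
    case 2
    note M = M2a[OF Cons.prems(1-4), of inp out]
    obtain x xs where Lx: "L!(l-1) = x#xs" using nn M 2 by (cases "L!(l-1)") auto
    define L2 where "L2 = L[l-1:=xs]"
    define R2 where "R2 = R[0:=x#R!0]"
    have lens: "length L2 = l" "length R2 = m" using Cons.prems(1,2) by (auto simp: L2_def R2_def)
    have "act (l+m) w (Some(inp, L2@R2, out)) = Some(inp', S', out')"
      using s1 M Lx 2 by (simp add: L2_def R2_def)
    from Cons.IH[OF lens Cons.prems(3,4) this] obtain L' R' zs w1 w2 where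
      h: "S' = L'@R'" "length L' = l" "length R' = m"
         "act l w1 (Some(inp, L2, [])) = Some(inp', L', zs)" "act m w2 (Some(zs, R2, out)) = Some([], R', out')"
      by blast
    have h4: "act l w1 (Some(inp, L2, [x])) = Some(inp', L', [x]@zs)"
      using act_prefix_Some[OF h(4), of "[x]"] by simp
    have "act l ((l+1)#w1) (Some(inp, L, [])) = Some(inp', L', x#zs)"
      using M2b[OF Cons.prems(3), of inp L "[]"] Lx h4 by (simp add: L2_def)
    moreover have "act m (1#w2) (Some(x#zs, R, out)) = Some([], R', out')"
      using M2c[OF Cons.prems(4), of x zs R out] h(5) by (simp add: R2_def)
    ultimately show ?thesis using h(1-3) 2 by blast
  next
    case 3
    define j where "j = i - l"
    have j2: "2 \<le> j" and ij: "i = j + l" using 3 by (auto simp: j_def)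
    note Mq = M3[OF Cons.prems(1-4) j2, of inp out]
    obtain a b c where mv: "move m j (Some([],R,out)) = Some(a,b,c)"
      using nn Mq[of "[]"] ij by (cases "move m j (Some([],R,out))") auto
    have s1e: "?s1 = Some(inp, L@b, c)" using Mq[of "[]"] mv ij by simp
    have lb: "length b = m" using move_len[OF mv] Cons.prems(2) by simp
    have "act (l+m) w (Some(inp, L@b, c)) = Some(inp', S', out')" using s1 s1e by simp
    from Cons.IH[OF Cons.prems(1) lb Cons.prems(3,4) this] obtain L' R' zs w1 w2 where
      h: "S' = L'@R'" "length L' = l" "length R' = m"
         "act l w1 (Some(inp, L, [])) = Some(inp', L', zs)" "act m w2 (Some(zs, b, c)) = Some([], R', out')"
      by blast
    obtain a' b' c' where mv': "move m j (Some(zs,R,out)) = Some(a',b',c')"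
      using nn Mq[of zs] ij by (cases "move m j (Some(zs,R,out))") auto
    have "Some(inp, L@b', c') = Some(inp, L@b, c)" using Mq[of zs] mv' s1e ij by simp
    then have "b' = b" "c' = c" by auto
    moreover have "a' = zs" using M3q[OF j2 mv'] .
    ultimately have "act m (j#w2) (Some(zs, R, out)) = Some([], R', out')" using mv' h(5) by simp
    then show ?thesis using h(1-4) by blast
  qed
qed



lemma noout:
  assumes "length L = l" "length R = m" "1 \<le> l" "1 \<le> m"
    and "act l w (Some(inp,L,[])) = Some(inp',L',[])"
  shows "act (l+m) w (Some(inp,L@R,out)) = Some(inp',L'@R,out)"
  using assms
proof (induction w arbitrary: inp L)
  case Nil then show ?case by simp
next
  case (Cons i w)
  have nn: "move l i (Some(inp,L,[])) \<noteq> None" using Cons.prems(5)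
    by (metis act_Cons act_None option.distinct(1))
  then obtain a b c where mv: "move l i (Some(inp,L,[])) = Some(a,b,c)" by (metis not_None_eq prod_cases3)
  have rest: "act l w (Some(a,b,c)) = Some(inp',L',[])" using Cons.prems(5) mv by simp
  have iv: "i \<in> {1..l+1}" using move_valid nn by blast
  show ?case
  proof (cases "i \<le> l")
    case True
    have c: "c = []" using M1out[OF True mv] .
    have lb: "length b = l" using move_len[OF mv] Cons.prems(1) by simp
    have "act (l+m) w (Some(a,b@R,out)) = Some(inp',L'@R,out)"
      using Cons.IH[OF lb Cons.prems(2-4)] rest c by simp
    then show ?thesis using M1[OF Cons.prems(1-4) True, of inp out "[]"] mv by simp
  next
    case False
    then have "i = l+1" using iv by auto
    then have "c \<noteq> []" using mv M2b[OF Cons.prems(3), of inp L "[]"] by (auto split: list.splits)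
    then show ?thesis using act_out_mono[OF rest] by auto
  qed
qed

lemma first_out:
  assumes "1 \<le> l" "act l w1 (Some(inp,L,[])) = Some(inp', L', z#zs')"
  shows "\<exists>t0 t1 inp1 L1 xs. w1 = t0 @ (l+1) # t1 \<and> act l t0 (Some(inp,L,[])) = Some(inp1,L1,[])
     \<and> L1!(l-1) = z#xs \<and> act l t1 (Some(inp1, L1[l-1:=xs], [])) = Some(inp', L', zs')"
  using assms
proof (induction w1 arbitrary: inp L)
  case Nil then show ?case by simp
next
  case (Cons i w)
  have nn: "move l i (Some(inp,L,[])) \<noteq> None" using Cons.prems(2)
    by (metis act_Cons act_None option.distinct(1))
  then obtain a b c where mv: "move l i (Some(inp,L,[])) = Some(a,b,c)" by (metis not_None_eq prod_cases3)
  have rest: "act l w (Some(a,b,c)) = Some(inp',L',z#zs')" using Cons.prems(2) mv by simp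
  have iv: "i \<in> {1..l+1}" using move_valid nn by blast
  show ?case
  proof (cases "i \<le> l")
    case True
    have c: "c = []" using M1out[OF True mv] .
    from Cons.IH[OF Cons.prems(1)] rest c obtain t0 t1 inp1 L1 xs where
      h: "w = t0 @ (l+1) # t1" "act l t0 (Some(a,b,[])) = Some(inp1,L1,[])"
       "L1!(l-1) = z#xs" "act l t1 (Some(inp1, L1[l-1:=xs], [])) = Some(inp', L', zs')" by blast
    show ?thesis
      by (rule exI[of _ "i#t0"], rule exI[of _ t1], rule exI[of _ inp1], rule exI[of _ L1], rule exI[of _ xs])
         (use h mv c in simp)
  next
    case False
    then have il: "i = l+1" using iv by auto
    obtain x xs where Lx: "L!(l-1) = x#xs" and abc: "(a,b,c) = (inp, L[l-1:=xs], [x])"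
      using mv M2b[OF Cons.prems(1), of inp L "[]"] il by (auto split: list.splits)
    have "act l w (Some(inp, L[l-1:=xs], [x]@[])) = Some(inp',L',z#zs')" using rest abc by simp
    from act_prefix_Some_rev[OF this] have "x = z" "act l w (Some(inp, L[l-1:=xs], [])) = Some(inp',L',zs')"
      by auto
    then show ?thesis using il Lx
      by (intro exI[of _ "[]"] exI[of _ w] exI[of _ inp] exI[of _ L] exI[of _ xs]) simp
  qed
qed

lemma compose_gen:
  assumes "length L = l" "length R = m" "1 \<le> l" "1 \<le> m"
    and "act l w1 (Some(inp, L, [])) = Some(inp', L', zs)"
    and "act m w2 (Some(zs, R, out)) = Some([], R', out')"
  shows "\<exists>w. act (l+m) w (Some(inp, L@R, out)) = Some(inp', L'@R', out')"
  using assms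
proof (induction w2 arbitrary: w1 inp L zs R out)
  case Nil
  then have "zs = []" "R' = R" "out' = out" by auto
  then show ?case using noout[OF Nil.prems(1-4)] Nil.prems(5) by blast
next
  case (Cons j w2)
  have nn: "move m j (Some(zs,R,out)) \<noteq> None" using Cons.prems(6)
    by (metis act_Cons act_None option.distinct(1))
  then obtain a b c where mv: "move m j (Some(zs,R,out)) = Some(a,b,c)" by (metis not_None_eq prod_cases3)
  have rest: "act m w2 (Some(a,b,c)) = Some([],R',out')" using Cons.prems(6) mv by simp
  have iv: "j \<in> {1..m+1}" using move_valid nn by blast
  have lb: "length b = m" using move_len[OF mv] Cons.prems(2) by simp
  show ?case
  proof (cases "j = 1")
    case True
    obtain z zs' where zs: "zs = z#zs'" using mv True Cons.prems(4)
      by (cases zs) (auto simp: move.simps)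
    have abc: "(a,b,c) = (zs', R[0:=z#R!0], out)" using mv True M2c[OF Cons.prems(4), of z zs' R out] zs by simp
    from first_out[OF Cons.prems(3)] Cons.prems(5) zs obtain t0 t1 inp1 L1 xs where
      h: "w1 = t0 @ (l+1) # t1" "act l t0 (Some(inp,L,[])) = Some(inp1,L1,[])"
       "L1!(l-1) = z#xs" "act l t1 (Some(inp1, L1[l-1:=xs], [])) = Some(inp', L', zs')" by blast
    have lL1: "length L1 = l" using act_len[OF h(2)] Cons.prems(1) by simp
    have a1: "act (l+m) t0 (Some(inp,L@R,out)) = Some(inp1,L1@R,out)"
      using noout[OF Cons.prems(1-4) h(2)] .
    have a2: "move (l+m) (l+1) (Some(inp1,L1@R,out)) = Some(inp1, L1[l-1:=xs] @ R[0:=z#R!0], out)"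
      using M2a[OF lL1 Cons.prems(2-4), of inp1 out] h(3) by simp
    have "\<exists>w. act (l+m) w (Some(inp1, L1[l-1:=xs] @ R[0:=z#R!0], out)) = Some(inp', L'@R', out')"
    proof -
      have l1: "length (L1[l-1:=xs]) = l" using lL1 by simp
      have l2: "length (R[0:=z#R!0]) = m" using Cons.prems(2) by simp
      have r: "act m w2 (Some(zs', R[0:=z#R!0], out)) = Some([],R',out')" using rest abc by simp
      show ?thesis by (rule Cons.IH[OF l1 l2 Cons.prems(3,4) h(4) r])
    qed
    then obtain w where "act (l+m) w (Some(inp1, L1[l-1:=xs] @ R[0:=z#R!0], out)) = Some(inp', L'@R', out')" by blast
    then have "act (l+m) (t0 @ (l+1) # w) (Some(inp,L@R,out)) = Some(inp', L'@R', out')"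
      using a1 a2 by (simp add: act_append)
    then show ?thesis by blast
  next
    case False
    then have j2: "2 \<le> j" using iv by auto
    have a: "a = zs" using M3q[OF j2 mv] .
    have m3: "move (l+m) (j+l) (Some(inp, L@R, out)) = Some(inp, L@b, c)"
      using M3[OF Cons.prems(1-4) j2, of inp out zs] mv by simp
    have "\<exists>w. act (l+m) w (Some(inp, L@b, c)) = Some(inp', L'@R', out')"
      using Cons.IH[OF Cons.prems(1) lb Cons.prems(3-5)] rest a by auto
    then obtain w where "act (l+m) w (Some(inp, L@b, c)) = Some(inp', L'@R', out')" by blast
    then have "act (l+m) ((j+l)#w) (Some(inp,L@R,out)) = Some(inp', L'@R', out')" using m3 by simp
    then show ?thesis by blast
  qed
qed



definition Reach :: "nat \<Rightarrow> nat list \<Rightarrow> nat list \<Rightarrow> bool" where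
  "Reach k xs ys \<longleftrightarrow> (\<exists>w. act k w (Some(xs, replicate k [], [])) = Some([], replicate k [], ys))"

lemma rep_split:
  assumes "L'@R' = replicate l [] @ replicate m []" "length L' = l"
  shows "L' = replicate l []" "R' = replicate m []"
  using assms by (auto simp: append_eq_append_conv)

lemma reach_split:
  assumes "1 \<le> l" "1 \<le> m" "Reach (l+m) xs ys"
  shows "\<exists>zs. Reach l xs zs \<and> Reach m zs ys"
proof -
  obtain w where w: "act (l+m) w (Some(xs, replicate l [] @ replicate m [], [])) = Some([], replicate l [] @ replicate m [], ys)"
    using assms(3) by (auto simp: Reach_def replicate_add)
  from split_gen[OF _ _ assms(1,2) w] obtain L' R' zs w1 w2 where
    h: "replicate l [] @ replicate m [] = L'@R'" "length L' = l" "length R' = m"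
     "act l w1 (Some(xs, replicate l [], [])) = Some([], L', zs)" "act m w2 (Some(zs, replicate m [], [])) = Some([], R', ys)"
    by auto
  have "L' = replicate l []" "R' = replicate m []" using rep_split h(1,2) by metis+
  then show ?thesis using h(4,5) by (auto simp: Reach_def)
qed

lemma reach_compose:
  assumes "1 \<le> l" "1 \<le> m" "Reach l xs zs" "Reach m zs ys"
  shows "Reach (l+m) xs ys"
proof -
  obtain w1 where w1: "act l w1 (Some(xs, replicate l [], [])) = Some([], replicate l [], zs)"
    using assms(3) by (auto simp: Reach_def)
  obtain w2 where w2: "act m w2 (Some(zs, replicate m [], [])) = Some([], replicate m [], ys)"
    using assms(4) by (auto simp: Reach_def)
  from compose_gen[OF _ _ assms(1,2) w1 w2] show ?thesis
    by (auto simp: Reach_def replicate_add)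
qed

lemma act_pass1: "act 1 (concat (replicate (length u) [1,2])) (Some(u@r, [[]], ou)) = Some(r, [[]], ou@u)"
proof (induction u arbitrary: ou)
  case Nil then show ?case by simp
next
  case (Cons x u)
  have "act 1 (concat (replicate (length (x#u)) [1,2])) (Some((x#u)@r, [[]], ou))
      = act 1 (concat (replicate (length u) [1,2])) (Some(u@r, [[]], ou@[x]))"
    by (simp add: move.simps)
  also have "\<dots> = Some(r, [[]], ou@x#u)" using Cons.IH[of "ou@[x]"] by simp
  finally show ?case by simp
qed

lemma reach_id: "Reach 1 xs xs"
  using act_pass1[of xs "[]" "[]"] by (auto simp: Reach_def)

lemma reach_swap: "Reach 1 (u@a#b#v) (u@b#a#v)"
proof -
  let ?w = "concat (replicate (length u) [1,2]) @ [1,1,2,2] @ concat (replicate (length v) [1,2])"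
  have "act 1 ?w (Some(u@a#b#v, [[]], [])) = act 1 (concat (replicate (length v) [1,2])) (act 1 [1,1,2,2] (Some(a#b#v, [[]], u)))"
    using act_pass1[of u "a#b#v" "[]"] by (simp add: act_append)
  also have "act 1 [1,1,2,2] (Some(a#b#v, [[]], u)) = Some(v, [[]], u@[b,a])"
    by (simp add: move.simps)
  also have "act 1 (concat (replicate (length v) [1,2])) (Some(v, [[]], u@[b,a])) = Some([], [[]], u@b#a#v)"
    using act_pass1[of v "[]" "u@[b,a]"] by simp
  finally show ?thesis unfolding Reach_def by (intro exI[of _ ?w]) simp
qed

lemma reach_mono1: "1 \<le> k \<Longrightarrow> Reach k xs ys \<Longrightarrow> Reach (k+1) xs ys"
  using reach_compose[of k 1 xs ys ys] reach_id by auto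

lemma reach_mono: "1 \<le> k \<Longrightarrow> k \<le> K \<Longrightarrow> Reach k xs ys \<Longrightarrow> Reach K xs ys"
proof (induction K)
  case 0 then show ?case by simp
next
  case (Suc K)
  then show ?case using reach_mono1[of K] by (cases "k = Suc K") auto
qed


lemma mset_upd: "n < length st \<Longrightarrow> mset (concat (st[n:=x])) + mset (st!n) = mset (concat st) + mset x"
proof -
  assume n: "n < length st"
  have e1: "st = take n st @ st!n # drop (Suc n) st" using n by (rule id_take_nth_drop)
  have a: "mset (concat st) = mset (concat (take n st)) + mset (st!n) + mset (concat (drop (Suc n) st))"
    using arg_cong[OF e1, of "\<lambda>l. mset (concat l)"] by simp
  have e2: "st[n:=x] = take n st @ x # drop (Suc n) st" using n by (rule upd_conv_take_nth_drop)
  have b: "mset (concat (st[n:=x])) = mset (concat (take n st)) + mset x + mset (concat (drop (Suc n) st))"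
    using arg_cong[OF e2, of "\<lambda>l. mset (concat l)"] by simp
  show ?thesis using a b by (simp add: ac_simps)
qed

lemma move_mset:
  assumes "length st = k" "move k i (Some(inp,st,ou)) = Some(inp',st',ou')"
  shows "mset inp + mset (concat st) + mset ou = mset inp' + mset (concat st') + mset ou'"
proof -
  have iv: "i \<in> {1..k+1}" using move_valid assms(2) by blast
  have k1: "1 \<le> k"
  proof (rule ccontr)
    assume "\<not> 1 \<le> k"
    then have "k = 0" by simp
    then have "move k i (Some(inp,st,ou)) = None" by (auto simp: move.simps)
    then show False using assms(2) by simp
  qed
  consider "i = 1 \<and> 1 \<le> k" | "\<not>(i = 1 \<and> 1 \<le> k) \<and> 2 \<le> i \<and> i \<le> k"
    | "\<not>(i = 1 \<and> 1 \<le> k) \<and> \<not>(2 \<le> i \<and> i \<le> k) \<and> i = k+1 \<and> 1 \<le> k" using iv k1 by force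
  then show ?thesis
  proof cases
    case 1
    then obtain x xs where ix: "inp = x#xs" and r: "inp' = xs" "st' = st[0 := x # st!0]" "ou' = ou"
      using assms(2) by (auto simp: move.simps split: list.splits)
    have "mset (concat st') + mset (st!0) = mset (concat st) + mset (x # st!0)"
    proof -
      have "0 < length st" using 1 assms(1) by auto
      from mset_upd[OF this, of "x # st!0"] show ?thesis unfolding r .
    qed
    then show ?thesis using ix r by (simp add: ac_simps)
  next
    case 2
    have mm: "move k i (Some(inp,st,ou)) = (case st!(i-2) of [] \<Rightarrow> None
          | x # xs \<Rightarrow> Some (inp, st[i - 2 := xs, i - 1 := x # st ! (i - 1)], ou))"
      using 2 by (simp add: move.simps)
    obtain x xs where sx: "st!(i-2) = x#xs" using mm assms(2) by (cases "st!(i-2)") auto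
    have r: "inp' = inp" "st' = st[i-2 := xs, i-1 := x # st!(i-1)]" "ou' = ou"
      using mm assms(2) sx by auto
    have e1: "mset (concat (st[i-2 := xs])) + mset (st!(i-2)) = mset (concat st) + mset xs"
    proof -
      have "i - 2 < length st" using 2 assms(1) by auto
      from mset_upd[OF this, of xs] show ?thesis .
    qed
    have e2: "mset (concat st') + mset (st!(i-1)) = mset (concat (st[i-2 := xs])) + mset (x # st!(i-1))"
    proof -
      have ne: "st[i-2 := xs]!(i-1) = st!(i-1)" using 2 by (subst nth_list_update_neq) auto
      have "i - 1 < length (st[i-2 := xs])" using 2 assms(1) by auto
      from mset_upd[OF this, of "x # st!(i-1)"] show ?thesis unfolding r ne .
    qed
    then have "mset (concat st') = add_mset x (mset (concat (st[i-2 := xs])))"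
      by simp
    moreover have "add_mset x (mset (concat (st[i-2 := xs]))) = mset (concat st)" using e1 sx by simp
    ultimately have "mset (concat st') = mset (concat st)" by simp
    then show ?thesis using r by simp
  next
    case 3
    have mm: "move k i (Some(inp,st,ou)) = (case st!(k-1) of [] \<Rightarrow> None
          | x # xs \<Rightarrow> Some (inp, st[k-1 := xs], ou@[x]))"
      using 3 by (simp add: move.simps)
    obtain x xs where sx: "st!(k-1) = x#xs" using mm assms(2) by (cases "st!(k-1)") auto
    have r: "inp' = inp" "st' = st[k-1 := xs]" "ou' = ou@[x]"
      using mm assms(2) sx by auto
    have "mset (concat st') + mset (st!(k-1)) = mset (concat st) + mset xs"
    proof -
      have "k - 1 < length st" using 3 assms(1) by auto
      from mset_upd[OF this, of xs] show ?thesis unfolding r .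
    qed
    then have "add_mset x (mset (concat st')) = mset (concat st)" using sx by simp
    then show ?thesis using r by (simp add: ac_simps)
  qed
qed

lemma act_mset:
  assumes "length st = k" "act k w (Some(inp,st,ou)) = Some(inp',st',ou')"
  shows "mset inp + mset (concat st) + mset ou = mset inp' + mset (concat st') + mset ou'"
  using assms
proof (induction w arbitrary: inp st ou)
  case Nil then show ?case by simp
next
  case (Cons i w)
  then obtain a b c where mv: "move k i (Some(inp,st,ou)) = Some(a,b,c)"
    by (metis act_Cons act_None not_None_eq prod_cases3)
  have lb: "length b = k" using move_len[OF mv] Cons.prems(1) by simp
  show ?case using move_mset[OF Cons.prems(1) mv] Cons.IH[OF lb] Cons.prems(2) mv by simp
qed

lemma reach_mset: "Reach k xs ys \<Longrightarrow> mset ys = mset xs"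
proof -
  assume "Reach k xs ys"
  then obtain w where "act k w (Some(xs, replicate k [], [])) = Some([], replicate k [], ys)"
    unfolding Reach_def by blast
  from act_mset[OF _ this] show ?thesis by simp
qed



definition swp :: "nat list \<Rightarrow> nat list \<Rightarrow> bool" where
  "swp xs ys \<longleftrightarrow> (\<exists>u a b v. xs = u@a#b#v \<and> ys = u@b#a#v)"

lemma swp_cons: "swp\<^sup>*\<^sup>* xs ys \<Longrightarrow> swp\<^sup>*\<^sup>* (y#xs) (y#ys)"
proof (induction rule: rtranclp_induct)
  case base then show ?case by simp
next
  case (step ys zs)
  have "swp (y#ys) (y#zs)" using step(2) unfolding swp_def by (metis append_Cons)
  then show ?case using step(3) by (rule rtranclp.rtrancl_into_rtrancl[rotated])
qed

lemma bring_front: "swp\<^sup>*\<^sup>* (u @ y # v) (y # u @ v)"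
proof (induction u arbitrary: v rule: rev_induct)
  case Nil then show ?case by simp
next
  case (snoc a u0)
  have "swp ((u0@[a])@y#v) (u0@y#a#v)" unfolding swp_def by force
  moreover have "swp\<^sup>*\<^sup>* (u0@y#(a#v)) (y#u0@a#v)" by (rule snoc.IH)
  ultimately show ?case by (simp add: converse_rtranclp_into_rtranclp)
qed

lemma perm_swp: "mset ys = mset xs \<Longrightarrow> swp\<^sup>*\<^sup>* xs ys"
proof (induction ys arbitrary: xs)
  case Nil then show ?case by simp
next
  case (Cons y ys)
  have "y \<in> set xs" using Cons.prems by (metis list.set_intros(1) set_mset_mset)
  then obtain u v where xs: "xs = u@y#v" by (meson split_list)
  have "mset ys = mset (u@v)" using Cons.prems xs by simp
  then have "swp\<^sup>*\<^sup>* (u@v) ys" by (rule Cons.IH)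
  then have "swp\<^sup>*\<^sup>* (y#u@v) (y#ys)" by (rule swp_cons)
  then show ?case using bring_front[of u y v] xs by simp
qed

lemma swp_reach: "swp\<^sup>*\<^sup>* xs ys \<Longrightarrow> \<exists>k\<ge>1. Reach k xs ys"
proof (induction rule: rtranclp_induct)
  case base then show ?case using reach_id by blast
next
  case (step ys zs)
  then obtain k where k: "k \<ge> 1" "Reach k xs ys" by blast
  have "Reach 1 ys zs" using step(2) reach_swap unfolding swp_def by blast
  then have "Reach (k+1) xs zs" using reach_compose[of k 1 xs ys zs] k by simp
  then show ?case by (intro exI[of _ "k+1"]) simp
qed

lemma perm_mset:
  assumes "\<pi> permutes {1..n}"
  shows "mset (map \<pi> [1..<n+1]) = mset [1..<n+1]"
proof -
  have inj: "inj_on \<pi> {1..n}" using assms by (meson permutes_inj_on)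
  have st: "set [1..<n+1] = {1..n}" by auto
  have d: "distinct (map \<pi> [1..<n+1])" using inj st
    by (simp add: distinct_map)
  have s: "set (map \<pi> [1..<n+1]) = set [1..<n+1]" using permutes_image[OF assms] st
    by simp
  show ?thesis using d s set_eq_iff_mset_eq_distinct[of "map \<pi> [1..<n+1]" "[1..<n+1]"]
    by (metis distinct_upt)
qed

lemma Pnk_eq: "Pnk n k = {\<pi>. \<pi> permutes {1..n} \<and> Reach k [1..<n+1] (map \<pi> [1..<n+1])}"
  unfolding Pnk_def Reach_def init_state_def target_state_def
  using act_valid by (metis (no_types, lifting) option.distinct(1))

lemma exists_K: "\<exists>K\<ge>1. \<forall>\<pi>. \<pi> permutes {1..n} \<longrightarrow> Reach K [1..<n+1] (map \<pi> [1..<n+1])"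
proof -
  let ?S = "{\<pi>. \<pi> permutes {1..n}}"
  have ex: "\<exists>k\<ge>1. Reach k [1..<n+1] (map \<pi> [1..<n+1])" if "\<pi> \<in> ?S" for \<pi>
    using swp_reach[OF perm_swp[OF perm_mset]] that by auto
  define f where "f \<pi> = (SOME k. k \<ge> 1 \<and> Reach k [1..<n+1] (map \<pi> [1..<n+1]))" for \<pi>
  have f: "f \<pi> \<ge> 1 \<and> Reach (f \<pi>) [1..<n+1] (map \<pi> [1..<n+1])" if "\<pi> \<in> ?S" for \<pi>
    unfolding f_def using someI_ex[OF ex[OF that]] .
  have fin: "finite ?S" by (simp add: finite_permutations)
  have ne: "id \<in> ?S" by (simp add: permutes_id)
  define K where "K = Max (f ` ?S)"
  have le: "f \<pi> \<le> K" if "\<pi> \<in> ?S" for \<pi> unfolding K_def using fin that by simp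
  have K1: "K \<ge> 1" using le[OF ne] f[OF ne] by simp
  show ?thesis
    using K1 f le reach_mono by blast
qed

lemma kn_prop: "1 \<le> kn n \<and> Pnk n (kn n) = {\<pi>. \<pi> permutes {1..n}}"
proof -
  obtain K where K: "K \<ge> 1" "\<forall>\<pi>. \<pi> permutes {1..n} \<longrightarrow> Reach K [1..<n+1] (map \<pi> [1..<n+1])"
    using exists_K by blast
  have "1 \<le> K \<and> Pnk n K = {\<pi>. \<pi> permutes {1..n}}" using K by (auto simp: Pnk_eq)
  then show ?thesis unfolding kn_def by (rule LeastI)
qed



definition RS :: "nat \<Rightarrow> nat \<Rightarrow> nat list set" where
  "RS k n = {ys. Reach k [1..<n+1] ys}"

lemma RS_sub: "RS k n \<subseteq> {ys. set ys \<subseteq> {1..n} \<and> length ys = n}"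
proof
  fix ys assume "ys \<in> RS k n"
  then have m: "mset ys = mset [1..<n+1]" using reach_mset by (auto simp: RS_def)
  then have "set ys = set [1..<n+1]" by (metis mset_eq_setD)
  moreover have "length ys = n" using m by (metis length_upt diff_add_inverse2 size_mset)
  ultimately show "ys \<in> {ys. set ys \<subseteq> {1..n} \<and> length ys = n}" by auto
qed

lemma RS_fin: "finite (RS k n)"
  by (rule finite_subset[OF RS_sub]) (simp add: finite_lists_length_eq)

lemma RS_len: "ys \<in> RS k n \<Longrightarrow> length ys = n"
  using RS_sub by blast

lemma map_map_rep: "map (map g) s = replicate m [] \<Longrightarrow> s = replicate m []"
proof -
  assume h: "map (map g) s = replicate m []"
  then have l: "length s = m" by (metis length_map length_replicate)
  have "\<forall>y\<in>set s. y = []"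
  proof
    fix y assume "y \<in> set s"
    then have "map g y \<in> set (map (map g) s)" by simp
    then have "map g y = []" using h by (metis in_set_replicate)
    then show "y = []" by simp
  qed
  then show ?thesis using l by (simp add: replicate_eqI)
qed

lemma relabel:
  assumes "length zs = n" "Reach m zs ys"
  shows "ys \<in> map (\<lambda>i. zs!(i-1)) ` RS m n"
proof -
  define g where "g i = zs!(i-1)" for i
  have zs: "zs = map g [1..<n+1]"
    by (rule nth_equalityI) (auto simp: g_def assms(1) nth_upt simp del: upt_Suc)
  obtain w where w: "act m w (Some(zs, replicate m [], [])) = Some([], replicate m [], ys)"
    using assms(2) unfolding Reach_def by blast
  have "mapS g (Some([1..<n+1], replicate m [], [])) = Some(zs, replicate m [], [])"
    by (simp add: mapS_def zs)
  then have "mapS g (act m w (Some([1..<n+1], replicate m [], []))) = Some([], replicate m [], ys)"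
    using act_map[of "replicate m []" m w g "[1..<n+1]" "[]"] w by simp
  then obtain i' s' o' where a: "act m w (Some([1..<n+1], replicate m [], [])) = Some(i',s',o')"
    and e: "map g i' = []" "map (map g) s' = replicate m []" "map g o' = ys"
    by (auto simp: mapS_def)
  have "i' = []" "s' = replicate m []" using e map_map_rep by auto
  then have "o' \<in> RS m n" using a by (auto simp: RS_def Reach_def)
  have gg: "g = (\<lambda>i. zs!(i-1))" by (simp add: fun_eq_iff g_def)
  show ?thesis using \<open>o' \<in> RS m n\<close> e(3) unfolding gg by blast
qed

lemma card_RS_add:
  assumes "1 \<le> l" "1 \<le> m"
  shows "card (RS (l+m) n) \<le> card (RS l n) * card (RS m n)"
proof -
  let ?A = "\<lambda>zs. map (\<lambda>i. zs!(i-1)) ` RS m n"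
  have sub: "RS (l+m) n \<subseteq> (\<Union>zs\<in>RS l n. ?A zs)"
  proof
    fix ys assume "ys \<in> RS (l+m) n"
    then obtain zs where "Reach l [1..<n+1] zs" "Reach m zs ys"
      using reach_split[OF assms] by (auto simp: RS_def)
    then have "zs \<in> RS l n" "ys \<in> ?A zs" using relabel RS_len by (auto simp: RS_def)
    then show "ys \<in> (\<Union>zs\<in>RS l n. ?A zs)" by blast
  qed
  have fin: "finite (\<Union>zs\<in>RS l n. ?A zs)" using RS_fin by auto
  have "card (RS (l+m) n) \<le> card (\<Union>zs\<in>RS l n. ?A zs)" by (rule card_mono[OF fin sub])
  also have "\<dots> \<le> (\<Sum>zs\<in>RS l n. card (?A zs))" using RS_fin by (rule card_UN_le)
  also have "\<dots> \<le> (\<Sum>zs\<in>RS l n. card (RS m n))" by (rule sum_mono) (rule card_image_le[OF RS_fin])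
  also have "\<dots> = card (RS l n) * card (RS m n)" by simp
  finally show ?thesis .
qed

lemma card_RS_pow:
  assumes "1 \<le> l" "1 \<le> a"
  shows "card (RS (a*l) n) \<le> card (RS l n) ^ a"
  using assms(2)
proof (induction a)
  case 0 then show ?case by simp
next
  case (Suc a)
  show ?case
  proof (cases "a = 0")
    case True then show ?thesis by simp
  next
    case False
    then have "card (RS (a*l + l) n) \<le> card (RS (a*l) n) * card (RS l n)"
      using card_RS_add[of "a*l" l n] assms(1) by (simp add: Suc_le_eq)
    also have "\<dots> \<le> card (RS l n)^a * card (RS l n)" using Suc.IH False by (simp add: Suc_le_eq)
    finally show ?thesis by (simp add: add.commute mult.commute)
  qed
qed

lemma card_RS_mono: "1 \<le> k \<Longrightarrow> k \<le> K \<Longrightarrow> card (RS k n) \<le> card (RS K n)"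
  by (rule card_mono[OF RS_fin]) (auto simp: RS_def intro: reach_mono)

lemma fin_Pnk: "finite (Pnk n k)"
  by (rule finite_subset[of _ "{\<pi>. \<pi> permutes {1..n}}"]) (auto simp: Pnk_def finite_permutations)

lemma card_RS_Pnk: "card (RS l n) \<le> card (Pnk n l)"
proof -
  let ?F = "\<lambda>\<pi>::nat\<Rightarrow>nat. map \<pi> [1..<n+1]"
  have "RS l n \<subseteq> ?F ` Pnk n l"
  proof
    fix ys assume ys: "ys \<in> RS l n"
    then have r: "Reach l [1..<n+1] ys" by (simp add: RS_def)
    have m: "mset ys = mset [1..<n+1]" using reach_mset[OF r] .
    have len: "length ys = n" using RS_len[OF ys] .
    have dist: "distinct ys" using m by (metis distinct_upt mset_eq_imp_distinct_iff)
    have sy: "set ys = {1..n}" using m by (metis mset_eq_setD atLeastLessThanSuc_atLeastAtMost set_upt Suc_eq_plus1)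
    define \<pi> where "\<pi> i = (if i \<in> {1..n} then ys!(i-1) else i)" for i
    have map: "?F \<pi> = ys" by (rule nth_equalityI) (auto simp: \<pi>_def len nth_upt simp del: upt_Suc)
    have inj: "inj_on \<pi> {1..n}"
    proof (rule inj_onI)
      fix x y assume "x \<in> {1..n}" "y \<in> {1..n}" "\<pi> x = \<pi> y"
      then have "ys!(x-1) = ys!(y-1)" "x-1 < length ys" "y-1 < length ys" by (auto simp: \<pi>_def len)
      then have "x-1 = y-1" using dist nth_eq_iff_index_eq by blast
      then show "x = y" using \<open>x \<in> {1..n}\<close> \<open>y \<in> {1..n}\<close> by auto
    qed
    have img: "\<pi> ` {1..n} = {1..n}"
    proof -
      have st: "set [1..<n+1] = {1..n}" by auto
      have "\<pi> ` {1..n} = set (?F \<pi>)" by (simp only: set_map st)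
      also have "\<dots> = set ys" by (simp only: map)
      finally show ?thesis using sy by simp
    qed
    have "\<pi> permutes {1..n}"
      by (rule bij_imp_permutes) (use inj img in \<open>auto simp: bij_betw_def \<pi>_def\<close>)
    then have "\<pi> \<in> Pnk n l" using r map by (simp add: Pnk_eq)
    then show "ys \<in> ?F ` Pnk n l" using map by blast
  qed
  then have "card (RS l n) \<le> card (?F ` Pnk n l)" by (rule card_mono[OF finite_imageI[OF fin_Pnk]])
  also have "\<dots> \<le> card (Pnk n l)" by (rule card_image_le[OF fin_Pnk])
  finally show ?thesis .
qed

lemma fact_le_RS: "fact n \<le> card (RS (kn n) n)"
proof -
  let ?S = "{\<pi>::nat\<Rightarrow>nat. \<pi> permutes {1..n}}"
  let ?F = "\<lambda>\<pi>::nat\<Rightarrow>nat. map \<pi> [1..<n+1]"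
  have cs: "card ?S = fact n" by (rule card_permutations) auto
  have inj: "inj_on ?F ?S"
  proof (rule inj_onI)
    fix p q assume p: "p \<in> ?S" and q: "q \<in> ?S" and e: "?F p = ?F q"
    show "p = q"
    proof
      fix x
      show "p x = q x"
      proof (cases "x \<in> {1..n}")
        case True
        then have "x \<in> set [1..<n+1]" by auto
        then show ?thesis using e by (metis map_eq_conv)
      next
        case False then show ?thesis using p q by (simp add: permutes_def)
      qed
    qed
  qed
  have sub: "?F ` ?S \<subseteq> RS (kn n) n"
    using kn_prop[of n] by (auto simp: RS_def Pnk_eq)
  have "card ?S = card (?F ` ?S)" using card_image[OF inj] by simp
  also have "\<dots> \<le> card (RS (kn n) n)" by (rule card_mono[OF RS_fin sub])
  finally show ?thesis using cs by simp
qed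

lemma key_bound:
  assumes "1 \<le> l"
  shows "fact n \<le> card (Pnk n l) ^ ((kn n + l - 1) div l)"
proof -
  define K where "K = kn n"
  define a where "a = (K + l - 1) div l"
  have K1: "1 \<le> K" using kn_prop[of n] by (simp add: K_def)
  have a1: "1 \<le> a"
  proof -
    have "l div l \<le> (K + l - 1) div l" by (rule div_le_mono) (use K1 in simp)
    then show ?thesis using assms by (simp add: a_def)
  qed
  have Kal: "K \<le> a*l"
  proof -
    have e: "a*l + (K+l-1) mod l = K+l-1" by (simp add: a_def)
    have "(K+l-1) mod l < l" using assms by simp
    then show ?thesis using e assms by linarith
  qed
  have "fact n \<le> card (RS K n)" using fact_le_RS K_def by simp
  also have "\<dots> \<le> card (RS (a*l) n)" by (rule card_RS_mono[OF K1 Kal])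
  also have "\<dots> \<le> card (RS l n)^a" by (rule card_RS_pow[OF assms a1])
  also have "\<dots> \<le> card (Pnk n l)^a" by (rule power_mono[OF card_RS_Pnk]) simp
  finally show ?thesis by (simp add: a_def K_def)
qed



lemma pow_fact_le_exp: "(real n)^n / fact n \<le> exp (real n)"
proof -
  let ?f = "\<lambda>k. real n ^ k /\<^sub>R fact k"
  have s: "summable ?f" using exp_converges[of "real n"] by (rule sums_summable)
  have "sum ?f {n} \<le> suminf ?f" by (rule sum_le_suminf[OF s]) auto
  also have "suminf ?f = exp (real n)" using exp_converges[of "real n"] by (simp add: sums_iff)
  finally show ?thesis by (simp add: divide_inverse mult.commute)
qed

lemma ln_fact_ge: "n \<ge> 1 \<Longrightarrow> real n * ln (real n) - real n \<le> ln (fact n)"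
proof -
  assume n: "n \<ge> 1"
  have pos: "(real n)^n > 0" "(fact n::real) > 0" using n by auto
  have "ln ((real n)^n / fact n) \<le> ln (exp (real n))"
    using pow_fact_le_exp pos by (subst ln_le_cancel_iff) auto
  then have "ln ((real n)^n) - ln (fact n) \<le> real n" using pos by (simp add: ln_div)
  moreover have "ln ((real n)^n) = real n * ln (real n)" using n by (simp add: ln_realpow)
  ultimately show ?thesis by simp
qed

theorem proposition2:
  fixes l :: nat and b :: real
  assumes "l \<ge> 1" and "b > 1"
    and "(\<lambda>n. real (card (Pnk n l))) \<in> O(\<lambda>n. b ^ n)"
  shows "\<exists>C. \<forall>\<^sub>F n in at_top.
           real l * log 2 (real n) / log 2 b - C \<le> real (kn n)"
proof -
  obtain c where c: "c > 0" and ev: "eventually (\<lambda>n. norm (real (card (Pnk n l))) \<le> c * norm (b ^ n)) at_top"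
    using landau_o.bigE[OF assms(3)] by blast
  define C' where "C' = max c 1"
  define L where "L = ln C'"
  define \<beta> where "\<beta> = ln b"
  define D where "D = 1 + L / \<beta>"
  have \<beta>: "\<beta> > 0" using assms(2) by (simp add: \<beta>_def)
  have L0: "L \<ge> 0" by (simp add: L_def C'_def)
  have C'1: "C' \<ge> 1" by (simp add: C'_def)
  have D0: "D \<ge> 1" using L0 \<beta> by (simp add: D_def)
  obtain N0 where N0': "\<forall>n\<ge>N0. norm (real (card (Pnk n l))) \<le> c * norm (b ^ n)"
    using ev unfolding eventually_at_top_linorder by blast
  have N0: "real (card (Pnk n l)) \<le> c * b ^ n" if "n \<ge> N0" for n
  proof -
    have "norm (b ^ n) = b ^ n" using assms(2) by (simp add: norm_power)
    moreover have "norm (real (card (Pnk n l))) \<le> c * norm (b ^ n)" using N0' that by blast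
    ultimately show ?thesis by simp
  qed
  have main: "real l * log 2 (real n) / log 2 b - (real l * D / \<beta> + real l) \<le> real (kn n)"
    if n: "n \<ge> max N0 1" for n
  proof -
    define K where "K = kn n"
    define a where "a = (K + l - 1) div l"
    have K1: "1 \<le> K" using kn_prop[of n] by (simp add: K_def)
    have a1: "1 \<le> a"
    proof -
      have "l div l \<le> (K + l - 1) div l" by (rule div_le_mono) (use K1 in simp)
      then show ?thesis using assms(1) by (simp add: a_def)
    qed
    have aK: "a * l \<le> K + l - 1" unfolding a_def by (metis div_mult_mod_eq le_add1)
    have aK': "real l * real a - real l \<le> real K"
    proof -
      have "a * l \<le> K + l - 1" by (rule aK)
      then have "real (a*l) \<le> real K + real l - 1" using K1 assms(1) by linarith
      then show ?thesis by (simp add: algebra_simps)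
    qed
    have n1: "n \<ge> 1" and nN: "n \<ge> N0" using n by auto
    have bn: "real (card (Pnk n l)) \<le> C' * b^n"
    proof -
      have "c * b^n \<le> C' * b^n" using assms(2) by (intro mult_right_mono) (auto simp: C'_def)
      then show ?thesis using N0[OF nN] by linarith
    qed
    have pos: "C' * b^n > 0" using C'1 assms(2) by simp
    have "fact n \<le> card (Pnk n l) ^ a" using key_bound[OF assms(1), of n] by (simp add: a_def K_def)
    then have "(fact n :: real) \<le> real (card (Pnk n l)) ^ a" by (metis of_nat_fact of_nat_le_iff of_nat_power)
    also have "\<dots> \<le> (C' * b^n) ^ a" by (rule power_mono[OF bn]) simp
    finally have f: "(fact n :: real) \<le> (C' * b^n) ^ a" .
    have "ln (fact n) \<le> ln ((C' * b^n) ^ a)" using f pos by (subst ln_le_cancel_iff) auto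
    also have "\<dots> = real a * (L + real n * \<beta>)"
      using C'1 assms(2) by (simp add: ln_realpow ln_mult L_def \<beta>_def)
    finally have up: "ln (fact n) \<le> real a * (L + real n * \<beta>)" .
    have lo: "real n * ln (real n) - real n \<le> ln (fact n)" by (rule ln_fact_ge[OF n1])
    have lnn: "ln (real n) \<le> real n"
    proof -
      have "real n > 0" using n1 by simp
      from ln_less_self[OF this] show ?thesis by simp
    qed
    have claim: "real a * \<beta> \<ge> ln (real n) - D"
    proof (rule ccontr)
      assume "\<not> ?thesis"
      then have h: "real a * \<beta> < ln (real n) - D" by simp
      have "real a * \<beta> < ln (real n)" using h D0 by linarith
      then have a_lt: "real a < ln (real n) / \<beta>" using \<beta> by (simp add: field_simps)
      have "real a * L \<le> ln (real n) / \<beta> * L" using a_lt L0 by (intro mult_right_mono) auto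
      also have "\<dots> \<le> real n / \<beta> * L" using lnn \<beta> L0 by (intro mult_right_mono divide_right_mono) auto
      finally have t1: "real a * L \<le> real n * (L / \<beta>)" by simp
      have t2: "real n * (real a * \<beta>) < real n * (ln (real n) - D)" using h n1 by simp
      have "real a * (L + real n * \<beta>) = real a * L + real n * (real a * \<beta>)" by (simp add: algebra_simps)
      also have "\<dots> < real n * (L / \<beta>) + real n * (ln (real n) - D)" using t1 t2 by linarith
      also have "\<dots> = real n * ln (real n) - real n" by (simp add: D_def algebra_simps)
      finally show False using up lo by linarith
    qed
    have "real l * log 2 (real n) / log 2 b = real l * (ln (real n) / \<beta>)"
      by (simp add: log_def \<beta>_def)
    also have "\<dots> \<le> real l * ((real a * \<beta> + D) / \<beta>)"
      using claim \<beta> by (intro mult_left_mono divide_right_mono) auto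
    also have "\<dots> = real l * real a + real l * D / \<beta>" using \<beta> by (simp add: field_simps)
    finally show ?thesis using aK' by (simp add: K_def)
  qed
  have "\<forall>\<^sub>F n in at_top. real l * log 2 (real n) / log 2 b - (real l * D / \<beta> + real l) \<le> real (kn n)"
    unfolding eventually_at_top_linorder
    by (rule exI[of _ "max N0 1"]) (use main in blast)
  then show ?thesis by blast
qed


end
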